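(* Let $y_0\in\mathbb{R}$, $b>0$, $\epsilon>0$, and let $f:[y_0,\infty)\to\mathbb{R}$ be such that $p:=1/f$ is well defined and twice differentiable on $[y_0,\infty)$, with $f(y_0)>0$, $f'(y)>0$ and $p''(y)>0$ for all $y\ge y_0$. Assume $b<\int_{y_0}^{\infty}p(y)\,dy$ (possibly $+\infty$). For $h>0$ and integers $N\ge0$ define $$\Sigma_{l,h,N}=\sum_{i=1}^{N}h\,p(y_0+hi),\qquad \Sigma_{t,h,N}=\sum_{i=1}^{N}\frac h2\big(p(y_0+hi)+p(y_0+h(i-1))\big).$$ For each positive integer $j$ let $h^{(j)}=\epsilon/j$, let $n_2^{(j)}$ be the smallest positive integer $N$ with $\Sigma_{l,h^{(j)},N}\ge b$ (assume $n_2^{(1)}$ exists), and let $n_3^{(j)}$ be the largest integer $N\ge0$ with $\Sigma_{t,h^{(j)},N}\le b$. Assume $n_3^{(1)}\ge1$. If $j$ is a positive integer such that $\Sigma_{t,h^{(j)},\,n_2^{(j)}-j}\le b$ (i.e. Algorithm 1, which for $j=1,2,\dots$ stops at the first $j$ with this inequality, can stop at iteration $j$), then $$j>1+\frac12\cdot\frac{p(y_0)-p\big(y_0+h^{(1)}n_3^{(1)}-h^{(1)}\big)-2\,p\big(y_0+h^{(1)}n_3^{(1)}\big)}{2\,p\big(y_0+h^{(1)}n_3^{(1)}-h^{(1)}\big)}.$$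
   Context: $\Sigma_{l,h,N}$ and $\Sigma_{t,h,N}$ are the lower rectangular and trapezoidal sums with step $h$ for $\int_{y_0}^{y_0+hN}p(y)\,dy$; empty sums are $0$. Here $h^{(1)}=\epsilon$. *)

theory Defs
  imports "HOL-Analysis.Analysis"
begin

definition sigma_l :: "(real \<Rightarrow> real) \<Rightarrow> real \<Rightarrow> real \<Rightarrow> nat \<Rightarrow> real" where
  "sigma_l p y0 h N = (\<Sum>i = 1..N. h * p (y0 + h * real i))"

definition sigma_t :: "(real \<Rightarrow> real) \<Rightarrow> real \<Rightarrow> real \<Rightarrow> nat \<Rightarrow> real" where
  "sigma_t p y0 h N = (\<Sum>i = 1..N. h / 2 * (p (y0 + h * real i) + p (y0 + h * (real i - 1))))"

definition n2 :: "(real \<Rightarrow> real) \<Rightarrow> real \<Rightarrow> real \<Rightarrow> real \<Rightarrow> nat \<Rightarrow> nat" where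
  "n2 p y0 eps b j = (LEAST N. 0 < N \<and> sigma_l p y0 (eps / real j) N \<ge> b)"

definition n3 :: "(real \<Rightarrow> real) \<Rightarrow> real \<Rightarrow> real \<Rightarrow> real \<Rightarrow> nat \<Rightarrow> nat" where
  "n3 p y0 eps b j = (GREATEST N. sigma_t p y0 (eps / real j) N \<le> b)"

end

theory Submission imports Defs begin

lemma mvt_within:
  fixes g g' :: "real \<Rightarrow> real"
  assumes der: "\<And>y. y \<ge> y0 \<Longrightarrow> (g has_real_derivative g' y) (at y within {y0..})"
    and "y0 \<le> a" "a \<le> b"
  shows "\<exists>\<xi>\<in>{a..b}. g b - g a = g' \<xi> * (b - a)"
proof -
  have "\<exists>\<xi>\<in>{a..b}. g b - g a = (\<lambda>t. g' \<xi> * t) (b - a)"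
  proof (rule mvt_very_simple[OF \<open>a \<le> b\<close>])
    fix x assume x: "a \<le> x" "x \<le> b"
    have "(g has_real_derivative g' x) (at x within {a..b})"
      using DERIV_subset[OF der] x assms by auto
    then show "(g has_derivative (\<lambda>t. g' x * t)) (at x within {a..b})"
      by (simp add: has_field_derivative_def)
  qed
  then show ?thesis by simp
qed

lemma gauss_real: "(\<Sum>k=1..j. real k) = real j * (real j + 1) / 2"
  by (induction j) (auto simp: field_simps)

lemma sl_split: "sigma_l p y0 h (M + K) = sigma_l p y0 h M + (\<Sum>k=1..K. h * p (y0 + h * real (M + k)))"
  by (induction K) (auto simp: sigma_l_def add_ac)

lemma st_sl: "sigma_t p y0 h N = sigma_l p y0 h N + h/2 * (p y0 - p (y0 + h * real N))"
  by (induction N) (auto simp: sigma_t_def sigma_l_def field_simps)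

lemma block_le:
  fixes p :: "real \<Rightarrow> real"
  assumes chord: "\<And>x z w. y0 \<le> x \<Longrightarrow> x \<le> z \<Longrightarrow> z \<le> w \<Longrightarrow> (p z - p x) * (w - z) \<le> (p w - p z) * (z - x)"
    and dec: "\<And>x y. y0 \<le> x \<Longrightarrow> x < y \<Longrightarrow> p y < p x"
    and j: "j > 0" and d: "d > 0" and x: "x \<ge> y0"
  shows "(\<Sum>k=1..j. (d/j) * p (x + (d/j) * real k)) < d/2 * (p x + p (x + d))"
proof -
  define A where "A = p x"
  define B where "B = p (x + d)"
  have BA: "B < A" using dec[OF x, of "x+d"] d by (simp add: A_def B_def)
  have tm: "(d/j) * p (x + (d/j) * real k) \<le> d/(real j)^2 * ((real j - real k) * A + real k * B)"
    if k: "k \<in> {1..j}" for k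
  proof -
    let ?z = "x + (d/j) * real k"
    have kj: "real k \<le> real j" using k by auto
    have z1: "x \<le> ?z" using d by auto
    have "(d/j) * real k \<le> (d/j) * real j" using kj d by (intro mult_left_mono) auto
    then have z2: "?z \<le> x + d" using j by simp
    have c: "(p ?z - A) * (x + d - ?z) \<le> (B - p ?z) * (?z - x)"
      using chord[OF x z1 z2] by (simp add: A_def B_def)
    have e1: "x + d - ?z = d/j * (real j - real k)" using j by (simp add: field_simps)
    have e2: "?z - x = d/j * real k" by simp
    have "(p ?z - A) * (real j - real k) \<le> (B - p ?z) * real k"
    proof -
      have "d/j * ((p ?z - A) * (real j - real k)) \<le> d/j * ((B - p ?z) * real k)"
        using c unfolding e1 e2 by (simp only: mult_ac)
      then show ?thesis by (rule mult_left_le_imp_le) (use d j in auto)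
    qed
    then have "real j * p ?z \<le> (real j - real k) * A + real k * B" by (simp add: algebra_simps)
    then have "d/(real j)^2 * (real j * p ?z) \<le> d/(real j)^2 * ((real j - real k) * A + real k * B)"
      using d by (intro mult_left_mono) auto
    then show ?thesis using j by (simp add: power2_eq_square)
  qed
  have "(\<Sum>k=1..j. (d/j) * p (x + (d/j) * real k)) \<le> (\<Sum>k=1..j. d/(real j)^2 * ((real j - real k) * A + real k * B))"
    by (rule sum_mono) (rule tm)
  also have "\<dots> = d/(real j)^2 * ((real j * real j - (\<Sum>k=1..j. real k)) * A + (\<Sum>k=1..j. real k) * B)"
    by (simp add: sum_distrib_left sum_distrib_right sum.distrib sum_subtractf algebra_simps)
  also have "\<dots> = d/2 * (A + B) + d/(2 * real j) * (B - A)"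
    unfolding gauss_real using j by (simp add: field_simps power2_eq_square)
  also have "\<dots> < d/2 * (A + B)"
    using BA d j by (simp add: mult_pos_neg divide_neg_pos)
  finally show ?thesis by (simp add: A_def B_def)
qed

lemma block_ge:
  fixes p :: "real \<Rightarrow> real"
  assumes dec: "\<And>x y. y0 \<le> x \<Longrightarrow> x < y \<Longrightarrow> p y < p x"
    and j: "j > 0" and d: "d > 0" and x: "x \<ge> y0"
  shows "(\<Sum>k=1..j. (d/j) * p (x + (d/j) * real k)) \<ge> d * p (x + d)"
proof -
  have "(\<Sum>k=1..j. (d/j) * p (x + d)) \<le> (\<Sum>k=1..j. (d/j) * p (x + (d/j) * real k))"
  proof (rule sum_mono)
    fix k assume k: "k \<in> {1..j}"
    have "(d/j) * real k \<le> (d/j) * real j" using k d by (intro mult_left_mono) auto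
    then have z2: "x + (d/j) * real k \<le> x + d" using j by simp
    have "p (x + d) \<le> p (x + (d/j) * real k)"
    proof (cases "x + (d/j) * real k = x + d")
      case False
      have "x \<le> x + (d/j) * real k" using d by auto
      then show ?thesis using dec[of "x + (d/j) * real k" "x + d"] False z2 x by auto
    qed simp
    then show "(d/j) * p (x + d) \<le> (d/j) * p (x + (d/j) * real k)"
      using d by (intro mult_left_mono) auto
  qed
  then show ?thesis using j by simp
qed


lemma sl_mono:
  assumes pos: "\<And>y. y \<ge> y0 \<Longrightarrow> p y > 0" and h: "h > 0" and MN: "M \<le> N"
  shows "sigma_l p y0 h M \<le> sigma_l p y0 h N"
proof -
  have "sigma_l p y0 h N = sigma_l p y0 h M + (\<Sum>k=1..N-M. h * p (y0 + h * real (M + k)))"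
    using sl_split[of p y0 h M "N-M"] MN by simp
  moreover have "(\<Sum>k=1..N-M. h * p (y0 + h * real (M + k))) \<ge> 0"
    using pos h by (intro sum_nonneg) (auto intro!: mult_nonneg_nonneg less_imp_le)
  ultimately show ?thesis by simp
qed

lemma block_rewrite:
  assumes j: "j > 0"
  shows "(\<Sum>k=1..j. (eps/j) * p (y0 + (eps/j) * real (j*m + k)))
       = (\<Sum>k=1..j. (eps/j) * p ((y0 + eps * real m) + (eps/j) * real k))"
proof (rule sum.cong[OF refl])
  fix k
  have "(eps/j) * real (j*m + k) = eps * real m + (eps/j) * real k"
    using j by (simp add: field_simps)
  then show "(eps/j) * p (y0 + (eps/j) * real (j*m + k)) = (eps/j) * p ((y0 + eps * real m) + (eps/j) * real k)"
    by (simp add: add.assoc)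
qed

lemma st_step: "sigma_t p y0 eps (Suc m) = sigma_t p y0 eps m + eps/2 * (p (y0 + eps * real m) + p ((y0 + eps * real m) + eps))"
  by (simp add: sigma_t_def field_simps)

lemma sl_step: "sigma_l p y0 eps (Suc m) = sigma_l p y0 eps m + eps * p ((y0 + eps * real m) + eps)"
  by (simp add: sigma_l_def field_simps)

lemma Lj_step:
  assumes j: "j > 0"
  shows "sigma_l p y0 (eps/j) (j * Suc m) = sigma_l p y0 (eps/j) (j*m)
     + (\<Sum>k=1..j. (eps/j) * p ((y0 + eps * real m) + (eps/j) * real k))"
  using sl_split[of p y0 "eps/j" "j*m" j] block_rewrite[OF j, of eps p y0 m] by (simp add: add.commute)

lemma Lj_le_T:
  fixes p :: "real \<Rightarrow> real"
  assumes chord: "\<And>x z w. y0 \<le> x \<Longrightarrow> x \<le> z \<Longrightarrow> z \<le> w \<Longrightarrow> (p z - p x) * (w - z) \<le> (p w - p z) * (z - x)"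
    and dec: "\<And>x y. y0 \<le> x \<Longrightarrow> x < y \<Longrightarrow> p y < p x"
    and j: "j > 0" and eps: "eps > 0"
  shows "sigma_l p y0 (eps/j) (j*m) \<le> sigma_t p y0 eps m \<and>
         (m > 0 \<longrightarrow> sigma_l p y0 (eps/j) (j*m) < sigma_t p y0 eps m)"
proof (induction m)
  case 0
  then show ?case by (simp add: sigma_l_def sigma_t_def)
next
  case (Suc m)
  have x: "y0 \<le> y0 + eps * real m" using eps by simp
  have "(\<Sum>k=1..j. (eps/j) * p ((y0 + eps * real m) + (eps/j) * real k))
        < eps/2 * (p (y0 + eps * real m) + p ((y0 + eps * real m) + eps))"
    by (rule block_le[OF chord dec j eps x])
  then have "sigma_l p y0 (eps/j) (j * Suc m) < sigma_t p y0 eps (Suc m)"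
    using Suc.IH unfolding Lj_step[OF j] st_step by linarith
  then show ?case by simp
qed

lemma Lj_ge_L:
  fixes p :: "real \<Rightarrow> real"
  assumes dec: "\<And>x y. y0 \<le> x \<Longrightarrow> x < y \<Longrightarrow> p y < p x"
    and j: "j > 0" and eps: "eps > 0"
  shows "sigma_l p y0 eps m \<le> sigma_l p y0 (eps/j) (j*m)"
proof (induction m)
  case 0
  then show ?case by (simp add: sigma_l_def)
next
  case (Suc m)
  have x: "y0 \<le> y0 + eps * real m" using eps by simp
  have "(\<Sum>k=1..j. (eps/j) * p ((y0 + eps * real m) + (eps/j) * real k))
        \<ge> eps * p ((y0 + eps * real m) + eps)"
    by (rule block_ge[OF dec j eps x])
  then show ?case
    using Suc.IH unfolding Lj_step[OF j] sl_step by linarith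
qed


theorem theorem2:
  fixes f f' p p' p'' :: "real \<Rightarrow> real" and y0 b eps :: real and j :: nat
  assumes b_pos: "b > 0" and eps_pos: "eps > 0"
    and p_def: "\<And>y. y \<ge> y0 \<Longrightarrow> p y = 1 / f y"
    and f_nz: "\<And>y. y \<ge> y0 \<Longrightarrow> f y \<noteq> 0"
    and f_deriv: "\<And>y. y \<ge> y0 \<Longrightarrow> (f has_real_derivative f' y) (at y within {y0..})"
    and p_deriv: "\<And>y. y \<ge> y0 \<Longrightarrow> (p has_real_derivative p' y) (at y within {y0..})"
    and p'_deriv: "\<And>y. y \<ge> y0 \<Longrightarrow> (p' has_real_derivative p'' y) (at y within {y0..})"
    and f_y0: "f y0 > 0"
    and f'_pos: "\<And>y. y \<ge> y0 \<Longrightarrow> f' y > 0"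
    and p''_pos: "\<And>y. y \<ge> y0 \<Longrightarrow> p'' y > 0"
    and b_lt_int: "ennreal b < set_nn_integral lborel {y0..} (\<lambda>y. ennreal (p y))"
    and n2_1_ex: "\<exists>N. 0 < N \<and> sigma_l p y0 eps N \<ge> b"
    and n3_1_ge: "n3 p y0 eps b 1 \<ge> 1"
    and j_pos: "j > 0"
    and stop: "sigma_t p y0 (eps / real j) (n2 p y0 eps b j - j) \<le> b"
  shows "real j > 1 + 1/2 * ((p y0 - p (y0 + eps * real (n3 p y0 eps b 1) - eps)
              - 2 * p (y0 + eps * real (n3 p y0 eps b 1)))
            / (2 * p (y0 + eps * real (n3 p y0 eps b 1) - eps)))"
proof -
  have finc: "f x < f y" if xy: "y0 \<le> x" "x < y" for x y
  proof -
    obtain \<xi> where xi: "\<xi> \<in> {x..y}" "f y - f x = f' \<xi> * (y - x)"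
      using mvt_within[OF f_deriv, of x y] xy by auto
    moreover have "f' \<xi> > 0" using f'_pos calculation xy by auto
    moreover have "y - x > 0" using xy by simp
    ultimately have "f' \<xi> * (y - x) > 0" by (intro mult_pos_pos) auto
    then show ?thesis using xi(2) by linarith
  qed
  have fpos: "f x > 0" if "y0 \<le> x" for x
    using finc[of y0 x] f_y0 that by (cases "x = y0") auto
  have pos: "p y > 0" if "y \<ge> y0" for y using p_def[OF that] fpos[OF that] by simp
  have dec: "p y < p x" if "y0 \<le> x" "x < y" for x y
    using p_def[of x] p_def[of y] finc[OF that] fpos[of x] that
    by (simp add: frac_less2)
  have p'mono: "p' x \<le> p' y" if xy: "y0 \<le> x" "x \<le> y" for x y
  proof -
    obtain \<xi> where xi: "\<xi> \<in> {x..y}" "p' y - p' x = p'' \<xi> * (y - x)"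
      using mvt_within[OF p'_deriv, of x y] xy by auto
    moreover have "p'' \<xi> > 0" using p''_pos calculation xy by auto
    moreover have "y - x \<ge> 0" using xy by simp
    ultimately have "p'' \<xi> * (y - x) \<ge> 0" by (intro mult_nonneg_nonneg) auto
    then show ?thesis using xi(2) by linarith
  qed
  have chord: "(p z - p x) * (w - z) \<le> (p w - p z) * (z - x)"
    if xzw: "y0 \<le> x" "x \<le> z" "z \<le> w" for x z w
  proof -
    obtain \<xi>1 where x1: "\<xi>1 \<in> {x..z}" "p z - p x = p' \<xi>1 * (z - x)"
      using mvt_within[OF p_deriv, of x z] xzw by auto
    obtain \<xi>2 where x2: "\<xi>2 \<in> {z..w}" "p w - p z = p' \<xi>2 * (w - z)"
      using mvt_within[OF p_deriv, of z w] xzw by auto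
    have "p' \<xi>1 \<le> p' \<xi>2" using p'mono x1 x2 xzw by auto
    then have "p' \<xi>1 * ((z - x) * (w - z)) \<le> p' \<xi>2 * ((z - x) * (w - z))"
      using xzw by (intro mult_right_mono) auto
    then show ?thesis unfolding x1 x2 by (simp add: mult_ac)
  qed
  define h where "h = eps / real j"
  have h: "h > 0" using eps_pos j_pos by (simp add: h_def)
  define N3 where "N3 = n3 p y0 eps b 1"
  define N2 where "N2 = n2 p y0 eps b j"
  obtain N0 where N0: "0 < N0" "sigma_l p y0 eps N0 \<ge> b" using n2_1_ex by auto
  have "0 < j * N0 \<and> sigma_l p y0 h (j * N0) \<ge> b"
    using N0 Lj_ge_L[where p=p and ?y0.0=y0 and j=j and eps=eps and m=N0, OF dec j_pos eps_pos] j_pos by (simp add: h_def)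
  then have N2: "0 < N2 \<and> sigma_l p y0 h N2 \<ge> b"
    unfolding N2_def n2_def h_def by (rule LeastI)
  have bound: "N < N0" if "sigma_t p y0 eps N \<le> b" for N
  proof (rule ccontr)
    assume "\<not> N < N0"
    then have NN: "N0 \<le> N" by simp
    have "sigma_l p y0 eps N0 \<le> sigma_l p y0 eps N" by (rule sl_mono[OF pos eps_pos NN])
    moreover have "p (y0 + eps * real N) < p y0"
      using dec[of y0 "y0 + eps * real N"] NN N0 eps_pos by simp
    moreover have "eps/2 * (p y0 - p (y0 + eps * real N)) > 0" using calculation(2) eps_pos by simp
    ultimately have "sigma_t p y0 eps N > b"
      using N0 unfolding st_sl by linarith
    then show False using that by simp
  qed
  have N3ge: "N3 \<ge> 1" using n3_1_ge by (simp add: N3_def)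
  have "sigma_t p y0 eps (GREATEST N. sigma_t p y0 eps N \<le> b) \<le> b"
  proof (rule GreatestI_nat[of _ 0 N0])
    show "sigma_t p y0 eps 0 \<le> b" using b_pos by (simp add: sigma_t_def)
    show "y \<le> N0" if "sigma_t p y0 eps y \<le> b" for y using bound[OF that] by simp
  qed
  then have T3: "sigma_t p y0 eps N3 \<le> b" by (simp add: N3_def n3_def)
  have "sigma_l p y0 h (j * N3) < sigma_t p y0 eps N3"
    using Lj_le_T[where p=p and ?y0.0=y0 and j=j and eps=eps and m=N3, OF chord dec j_pos eps_pos] N3ge by (simp add: h_def)
  then have Ljl: "sigma_l p y0 h (j * N3) < b" using T3 by simp
  have N2gt: "N2 > j * N3"
  proof (rule ccontr)
    assume "\<not> N2 > j * N3"
    then have "sigma_l p y0 h N2 \<le> sigma_l p y0 h (j * N3)" by (intro sl_mono[OF pos h]) auto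
    then show False using N2 Ljl by simp
  qed
  have N2j: "N2 \<ge> j" using N2gt N3ge j_pos
    by (metis less_imp_le mult.right_neutral mult_le_mono2 order_trans)
  define M where "M = N2 - j"
  have N2M: "N2 = M + j" using N2j by (simp add: M_def)
  have hj: "h * real j = eps" using j_pos by (simp add: h_def)
  have "M + j \<ge> j * N3 + 1" using N2gt N2M by simp
  then have "real (M + j) \<ge> real (j * N3 + 1)" by (simp only: of_nat_le_iff)
  then have Mge: "real M + 1 \<ge> real j * real N3 + 2 - real j" by simp
  define q where "q = p (y0 + eps * real N3 - eps)"
  define r where "r = p (y0 + eps * real N3)"
  define u where "u = p (y0 + h * real M)"
  define v where "v = p (y0 + h * real (M + 1))"
  define P0 where "P0 = p y0"
  have hM: "h * real M \<ge> eps * real N3 - eps + h"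
  proof -
    have "h * (real M + 1) \<ge> h * (real j * real N3 + 2 - real j)"
      using Mge h by (intro mult_left_mono) auto
    moreover have "h * (real N3 * real j) = eps * real N3"
      using hj by (metis mult.commute mult.left_commute)
    ultimately show ?thesis using hj by (simp add: algebra_simps)
  qed
  have N3y: "y0 \<le> y0 + eps * real N3 - eps" using N3ge eps_pos
    by (simp add: mult_le_cancel_left1 )
  have qpos: "q > 0" unfolding q_def using pos N3y by simp
  have rpos: "r > 0" unfolding r_def using pos N3ge eps_pos by simp
  have uq: "u < q" unfolding u_def q_def using dec[OF N3y, of "y0 + h * real M"] hM h by simp
  have vu: "v < u" unfolding u_def v_def using dec[of "y0 + h * real M" "y0 + h * real (M+1)"] N3y hM h
    by (simp add: algebra_simps)
  have spl: "sigma_l p y0 h N2 = sigma_l p y0 h M + (\<Sum>k=1..j. h * p (y0 + h * real (M + k)))"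
    unfolding N2M by (rule sl_split)
  have stM: "sigma_t p y0 h M = sigma_l p y0 h M + h/2 * (P0 - u)"
    unfolding P0_def u_def by (rule st_sl)
  have stop': "sigma_t p y0 h M \<le> b" using stop by (simp add: h_def M_def N2_def)
  have sumle: "(\<Sum>k=1..j. h * p (y0 + h * real (M + k))) \<le> (\<Sum>k=1..j. h * v)"
  proof (rule sum_mono)
    fix k assume k: "k \<in> {1..j}"
    have "p (y0 + h * real (M + k)) \<le> v"
    proof (cases "k = 1")
      case True then show ?thesis by (simp add: v_def)
    next
      case False
      then have "real (M + 1) < real (M + k)" using k by auto
      then have "y0 + h * real (M + 1) < y0 + h * real (M + k)" using h by simp
      moreover have "y0 \<le> y0 + h * real (M + 1)" using h by simp
      ultimately show ?thesis unfolding v_def using dec by (meson less_imp_le)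
    qed
    then show "h * p (y0 + h * real (M + k)) \<le> h * v" using h by (simp add: mult_left_mono)
  qed
  have "h/2 * (P0 - u) \<le> real j * h * v" using sumle spl stM stop' N2 by simp
  then have "h * (P0 - u) \<le> h * (2 * real j * v)" by (simp add: algebra_simps)
  then have key: "P0 - u \<le> 2 * real j * v" using h by simp
  have fin: "P0 - q - 2 * r < 4 * (real j - 1) * q"
  proof (cases "j = 1")
    case True
    have he: "h = eps" using hj True by simp
    have "M + 1 > N3" using N2gt N2M True by simp
    then have "real N3 < real (M + 1)" by (simp only: of_nat_less_iff)
    then have "eps * real N3 < h * real (M + 1)" using he eps_pos by simp
    then have "y0 + eps * real N3 < y0 + h * real (M + 1)" by simp
    then have "v < r" unfolding v_def r_def using dec N3y eps_pos by simp
    then show ?thesis using key uq True by simp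
  next
    case False
    then have j2: "real j \<ge> 2" using j_pos by simp
    have "2 * real j * v \<le> 2 * real j * u" using vu j_pos by simp
    then have "P0 \<le> (1 + 2 * real j) * u" using key by (simp add: algebra_simps)
    moreover have "(1 + 2 * real j) * u < (1 + 2 * real j) * q"
      using uq by (intro mult_strict_left_mono) auto
    moreover have "2 * real j * q \<le> 4 * (real j - 1) * q"
      using j2 qpos by (intro mult_right_mono) auto
    ultimately show ?thesis using rpos by (simp add: algebra_simps)
  qed
  have "(P0 - q - 2 * r) / (2 * q) < 2 * (real j - 1)"
  proof -
    have "P0 - q - 2 * r < 2 * (real j - 1) * (2 * q)" using fin by (simp add: algebra_simps)
    then show ?thesis using qpos by (subst pos_divide_less_eq) auto
  qed
  then show ?thesis unfolding P0_def q_def r_def N3_def by simp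
qed
end
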